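(* Let $G$ be a countable connected graph containing no alternating ray, and let $T$ be a normal spanning tree of $G$ with root $r$. Then $\mathrm{rank}_T(v)$ is defined for every vertex $v\in V(G)$.
   Context: A ray is a one-way infinite path; it is alternating if it passes through infinitely many vertices of finite degree and infinitely many of infinite degree (degrees taken in $G$). A spanning tree $T$ with root $r$ induces the tree order $\le$ ($u\le v$ iff $u$ lies on the path in $T$ from $r$ to $v$); $T$ is normal if the endpoints of every edge of $G$ are $\le$-comparable. $\lfloor v\rfloor=\{u:u\ge v\}$. The $T$-rank is defined by transfinite recursion: $\mathrm{rank}_T(v)=0$ if $\lfloor v\rfloor$ consists only of vertices of finite degree or only of vertices of infinite degree. For an ordinal $\alpha>0$, a vertex $v$ of infinite (resp. finite) degree has $\mathrm{rank}_T(v)=\alpha$ if no rank smaller than $\alpha$ has been assigned to $v$ and every vertex of finite (resp. infinite) degree in $\lfloor v\rfloor\setminus\{v\}$ has been assigned a rank smaller than $\alpha$. *)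

theory Defs
  imports Main "HOL-Library.Countable_Set"
begin

definition graph :: "'a set \<Rightarrow> ('a \<Rightarrow> 'a \<Rightarrow> bool) \<Rightarrow> bool" where
  "graph V adj \<longleftrightarrow> (\<forall>x y. adj x y \<longrightarrow> x \<in> V \<and> y \<in> V \<and> x \<noteq> y \<and> adj y x)"

definition is_path :: "'a set \<Rightarrow> ('a \<Rightarrow> 'a \<Rightarrow> bool) \<Rightarrow> 'a list \<Rightarrow> bool" where
  "is_path V adj p \<longleftrightarrow> p \<noteq> [] \<and> distinct p \<and> set p \<subseteq> V \<and>
     (\<forall>i. Suc i < length p \<longrightarrow> adj (p ! i) (p ! Suc i))"

definition connected_graph :: "'a set \<Rightarrow> ('a \<Rightarrow> 'a \<Rightarrow> bool) \<Rightarrow> bool" where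
  "connected_graph V adj \<longleftrightarrow> V \<noteq> {} \<and>
     (\<forall>u\<in>V. \<forall>v\<in>V. \<exists>p. is_path V adj p \<and> hd p = u \<and> last p = v)"

definition nbrs :: "('a \<Rightarrow> 'a \<Rightarrow> bool) \<Rightarrow> 'a \<Rightarrow> 'a set" where
  "nbrs adj v = {u. adj v u}"

definition infinite_degree :: "('a \<Rightarrow> 'a \<Rightarrow> bool) \<Rightarrow> 'a \<Rightarrow> bool" where
  "infinite_degree adj v \<longleftrightarrow> infinite (nbrs adj v)"

definition is_ray :: "'a set \<Rightarrow> ('a \<Rightarrow> 'a \<Rightarrow> bool) \<Rightarrow> (nat \<Rightarrow> 'a) \<Rightarrow> bool" where
  "is_ray V adj f \<longleftrightarrow> inj f \<and> range f \<subseteq> V \<and> (\<forall>i. adj (f i) (f (Suc i)))"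

definition alternating_ray :: "'a set \<Rightarrow> ('a \<Rightarrow> 'a \<Rightarrow> bool) \<Rightarrow> (nat \<Rightarrow> 'a) \<Rightarrow> bool" where
  "alternating_ray V adj f \<longleftrightarrow> is_ray V adj f \<and>
     infinite {i. \<not> infinite_degree adj (f i)} \<and> infinite {i. infinite_degree adj (f i)}"

definition is_tree :: "'a set \<Rightarrow> ('a \<Rightarrow> 'a \<Rightarrow> bool) \<Rightarrow> bool" where
  "is_tree V t \<longleftrightarrow> graph V t \<and> V \<noteq> {} \<and>
     (\<forall>u\<in>V. \<forall>v\<in>V. \<exists>!p. is_path V t p \<and> hd p = u \<and> last p = v)"

definition spanning_tree :: "'a set \<Rightarrow> ('a \<Rightarrow> 'a \<Rightarrow> bool) \<Rightarrow> ('a \<Rightarrow> 'a \<Rightarrow> bool) \<Rightarrow> bool" where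
  "spanning_tree V adj t \<longleftrightarrow> is_tree V t \<and> (\<forall>x y. t x y \<longrightarrow> adj x y)"

definition tree_le :: "'a set \<Rightarrow> ('a \<Rightarrow> 'a \<Rightarrow> bool) \<Rightarrow> 'a \<Rightarrow> 'a \<Rightarrow> 'a \<Rightarrow> bool" where
  "tree_le V t r u v \<longleftrightarrow> (\<exists>p. is_path V t p \<and> hd p = r \<and> last p = v \<and> u \<in> set p)"

definition normal_spanning_tree ::
  "'a set \<Rightarrow> ('a \<Rightarrow> 'a \<Rightarrow> bool) \<Rightarrow> ('a \<Rightarrow> 'a \<Rightarrow> bool) \<Rightarrow> 'a \<Rightarrow> bool" where
  "normal_spanning_tree V adj t r \<longleftrightarrow> spanning_tree V adj t \<and> r \<in> V \<and>
     (\<forall>x y. adj x y \<longrightarrow> tree_le V t r x y \<or> tree_le V t r y x)"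

definition up :: "'a set \<Rightarrow> ('a \<Rightarrow> 'a \<Rightarrow> bool) \<Rightarrow> 'a \<Rightarrow> 'a \<Rightarrow> 'a set" where
  "up V t r v = {u. tree_le V t r v u}"

text \<open>The set of vertices to which the transfinite recursion assigns some T-rank.
  The recursion assigns rank \<alpha> to v once all relevant vertices above v have rank < \<alpha>;
  the union over all ordinal stages is exactly the least fixed point of the
  corresponding monotone operator, i.e. the following inductive predicate.\<close>
inductive rank_defined :: "'a set \<Rightarrow> ('a \<Rightarrow> 'a \<Rightarrow> bool) \<Rightarrow> ('a \<Rightarrow> 'a \<Rightarrow> bool) \<Rightarrow> 'a \<Rightarrow> 'a \<Rightarrow> bool"
  for V adj t r where
  rank_zero: "v \<in> V \<Longrightarrow>
     (\<forall>u\<in>up V t r v. \<not> infinite_degree adj u) \<or> (\<forall>u\<in>up V t r v. infinite_degree adj u) \<Longrightarrow>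
     rank_defined V adj t r v"
| rank_inf: "v \<in> V \<Longrightarrow> infinite_degree adj v \<Longrightarrow>
     (\<forall>u\<in>up V t r v - {v}. \<not> infinite_degree adj u \<longrightarrow> rank_defined V adj t r u) \<Longrightarrow>
     rank_defined V adj t r v"
| rank_fin: "v \<in> V \<Longrightarrow> \<not> infinite_degree adj v \<Longrightarrow>
     (\<forall>u\<in>up V t r v - {v}. infinite_degree adj u \<longrightarrow> rank_defined V adj t r u) \<Longrightarrow>
     rank_defined V adj t r v"

end

theory Submission
  imports Defs
begin

definition tpath :: "'a set \<Rightarrow> ('a \<Rightarrow> 'a \<Rightarrow> bool) \<Rightarrow> 'a \<Rightarrow> 'a \<Rightarrow> 'a list" where
  "tpath V t r v = (THE p. is_path V t p \<and> hd p = r \<and> last p = v)"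

lemma tpath_prop:
  assumes "is_tree V t" "r \<in> V" "v \<in> V"
  shows "is_path V t (tpath V t r v) \<and> hd (tpath V t r v) = r \<and> last (tpath V t r v) = v"
proof -
  have "\<exists>!p. is_path V t p \<and> hd p = r \<and> last p = v" using assms unfolding is_tree_def by blast
  from theI'[OF this] show ?thesis unfolding tpath_def .
qed

lemma tpath_unique:
  assumes "is_tree V t" "r \<in> V" "v \<in> V" "is_path V t p" "hd p = r" "last p = v"
  shows "tpath V t r v = p"
proof -
  have "\<exists>!p. is_path V t p \<and> hd p = r \<and> last p = v" using assms(1-3) unfolding is_tree_def by blast
  from the1_equality[OF this] show ?thesis using assms(4-6) unfolding tpath_def by blast
qed

lemma take_path:
  assumes "is_path V t p" "0 < k"
  shows "is_path V t (take k p)"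
  using assms unfolding is_path_def
  by (auto simp: set_take_subset[THEN subset_trans] dest: in_set_takeD)

lemma tpath_prefix:
  assumes "is_tree V t" "r \<in> V" "v \<in> V" "u \<in> set (tpath V t r v)"
  shows "\<exists>k. tpath V t r u = take k (tpath V t r v)"
proof -
  let ?p = "tpath V t r v"
  have pp: "is_path V t ?p" "hd ?p = r" "last ?p = v" using tpath_prop[OF assms(1-3)] by auto
  obtain i where i: "i < length ?p" "?p ! i = u" using assms(4) by (metis in_set_conv_nth)
  have uV: "u \<in> V" using pp assms(4) unfolding is_path_def by auto
  have "is_path V t (take (Suc i) ?p)" using take_path pp by auto
  moreover have "hd (take (Suc i) ?p) = r" using pp i by (simp add: hd_take)
  moreover have "last (take (Suc i) ?p) = u" using i by (simp add: take_Suc_conv_app_nth)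
  ultimately show ?thesis using tpath_unique[OF assms(1,2) uV] by blast
qed

lemma tree_le_in:
  assumes "is_tree V t" "r \<in> V" "tree_le V t r u v"
  shows "v \<in> V" "u \<in> V" "u \<in> set (tpath V t r v)"
proof -
  obtain p where p: "is_path V t p" "hd p = r" "last p = v" "u \<in> set p"
    using assms(3) unfolding tree_le_def by blast
  show vV: "v \<in> V" using p unfolding is_path_def by auto
  show "u \<in> V" using p unfolding is_path_def by auto
  show "u \<in> set (tpath V t r v)" using tpath_unique[OF assms(1,2) vV p(1-3)] p by simp
qed

theorem lemma3p2:
  fixes V :: "'a set" and adj t :: "'a \<Rightarrow> 'a \<Rightarrow> bool" and r :: 'a
  assumes "graph V adj"
    and "countable V"
    and "connected_graph V adj"
    and "\<not> (\<exists>f. alternating_ray V adj f)"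
    and "normal_spanning_tree V adj t r"
  shows "\<forall>v\<in>V. rank_defined V adj t r v"
proof (rule ccontr)
  have tree: "is_tree V t" and rV: "r \<in> V" and sub: "\<And>x y. t x y \<Longrightarrow> adj x y"
    using assms(5) unfolding normal_spanning_tree_def spanning_tree_def by auto
  let ?I = "infinite_degree adj"
  let ?N = "\<lambda>v. v \<in> V \<and> \<not> rank_defined V adj t r v"
  have step: "\<exists>u. ?N u \<and> tree_le V t r v u \<and> (?I u \<longleftrightarrow> \<not> ?I v)" if "?N v" for v
  proof (cases "?I v")
    case True
    have "\<not> (\<forall>u\<in>up V t r v - {v}. \<not> ?I u \<longrightarrow> rank_defined V adj t r u)"
    proof
      assume h: "\<forall>u\<in>up V t r v - {v}. \<not> ?I u \<longrightarrow> rank_defined V adj t r u"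
      have "v \<in> V" using that by simp
      from rank_inf[OF this True h] show False using that by simp
    qed
    then obtain u where u: "u \<in> up V t r v - {v}" "\<not> ?I u" "\<not> rank_defined V adj t r u"
      by auto
    then have le: "tree_le V t r v u" by (simp add: up_def)
    have "u \<in> V" using tree_le_in(1)[OF tree rV le] .
    then show ?thesis using u le True by auto
  next
    case False
    have "\<not> (\<forall>u\<in>up V t r v - {v}. ?I u \<longrightarrow> rank_defined V adj t r u)"
    proof
      assume h: "\<forall>u\<in>up V t r v - {v}. ?I u \<longrightarrow> rank_defined V adj t r u"
      have "v \<in> V" using that by simp
      from rank_fin[OF this False h] show False using that by simp
    qed
    then obtain u where u: "u \<in> up V t r v - {v}" "?I u" "\<not> rank_defined V adj t r u"
      by auto
    then have le: "tree_le V t r v u" by (simp add: up_def)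
    have "u \<in> V" using tree_le_in(1)[OF tree rV le] .
    then show ?thesis using u le False by auto
  qed
  then obtain g where g: "\<And>v. ?N v \<Longrightarrow> ?N (g v) \<and> tree_le V t r v (g v) \<and> (?I (g v) \<longleftrightarrow> \<not> ?I v)"
    by metis
  assume "\<not> (\<forall>v\<in>V. rank_defined V adj t r v)"
  then obtain v0 where v0: "?N v0" by blast
  define w where "w n = (g ^^ n) v0" for n
  have wN: "?N (w n)" for n by (induction n) (auto simp: w_def v0 g)
  have wS: "tree_le V t r (w n) (w (Suc n)) \<and> (?I (w (Suc n)) \<longleftrightarrow> \<not> ?I (w n))" for n
    using g[OF wN[of n]] by (simp add: w_def)
  have wV: "w n \<in> V" for n using wN by auto
  define P where "P n = tpath V t r (w n)" for n
  have Pp: "is_path V t (P n)" "hd (P n) = r" "last (P n) = w n" for n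
    using tpath_prop[OF tree rV wV] by (auto simp: P_def)
  have Pstep: "\<exists>k. P n = take k (P (Suc n))" for n
    using tpath_prefix[OF tree rV wV tree_le_in(3)[OF tree rV wS[THEN conjunct1]]]
    by (simp add: P_def)
  have Plen: "length (P n) < length (P (Suc n))" for n
  proof -
    obtain k where k: "P n = take k (P (Suc n))" using Pstep by blast
    have "w n \<noteq> w (Suc n)" using wS[of n] by auto
    then have "P n \<noteq> P (Suc n)" using Pp by metis
    then have "k < length (P (Suc n))" using k by (metis not_le take_all)
    then show ?thesis using k by simp
  qed
  have Pmono: "\<exists>k. P n = take k (P (n + d))" for n d
  proof (induction d)
    case 0 show ?case by (metis add_0_right take_all order_refl)
  next
    case (Suc d)
    then obtain k where k: "P n = take k (P (n + d))" by blast
    obtain k' where k': "P (n + d) = take k' (P (Suc (n + d)))" using Pstep by blast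
    show ?case using k k' by (auto simp: min_def)
  qed
  have Pnth: "P n ! j = P m ! j" if "n \<le> m" "j < length (P n)" for n m j
  proof -
    have "m = n + (m - n)" using that(1) by simp
    then obtain k where k: "P n = take k (P m)" using Pmono[of n "m - n"] by metis
    show ?thesis using that(2) k by simp
  qed
  have lenge: "n < length (P n)" for n
  proof (induction n)
    case 0 show ?case using Pp(1)[of 0] unfolding is_path_def by simp
  next
    case (Suc n) show ?case using Suc Plen[of n] by simp
  qed
  define f where "f i = P i ! i" for i
  have fP: "f i = P m ! i" if "i \<le> m" for i m
    using Pnth[OF that lenge[of i]] by (simp add: f_def)
  have ray: "is_ray V adj f"
    unfolding is_ray_def
  proof (intro conjI allI)
    show "inj f"
    proof (rule injI)
      fix i j assume eq: "f i = f j"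
      show "i = j"
      proof (rule ccontr)
        assume ne: "i \<noteq> j"
        define m where "m = max i j"
        have "P m ! i = P m ! j" using eq fP[of i m] fP[of j m] by (simp add: m_def)
        moreover have "i < length (P m)" "j < length (P m)"
          using lenge[of m] by (auto simp: m_def)
        moreover have "distinct (P m)" using Pp(1) unfolding is_path_def by simp
        ultimately show False using ne nth_eq_iff_index_eq by blast
      qed
    qed
    show "range f \<subseteq> V"
    proof
      fix x assume "x \<in> range f"
      then obtain i where "x = f i" by blast
      then show "x \<in> V" using Pp(1)[of i] lenge[of i] unfolding is_path_def f_def
        by (meson nth_mem subsetD)
    qed
    fix i
    have "t (P (Suc i) ! i) (P (Suc i) ! Suc i)"
      using Pp(1)[of "Suc i"] lenge[of "Suc i"] unfolding is_path_def by blast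
    then show "adj (f i) (f (Suc i))" using fP[of i "Suc i"] fP[of "Suc i" "Suc i"] sub by simp
  qed
  define L where "L n = length (P n) - 1" for n
  have Lmono: "strict_mono L" unfolding strict_mono_Suc_iff L_def
    using Plen lenge by (metis Suc_diff_1 Suc_less_SucD less_nat_zero_code not_gr_zero)
  have fL: "f (L n) = w n" for n
  proof -
    have ln: "L n < length (P n)" using lenge[of n] by (simp add: L_def)
    have "n \<le> L n" using Lmono by (simp add: strict_mono_imp_increasing)
    then have "P n ! L n = f (L n)" using Pnth[OF _ ln] by (simp add: f_def)
    moreover have "P n ! L n = w n" using Pp(3)[of n] lenge[of n]
      by (metis L_def last_conv_nth list.size(3) not_less0)
    ultimately show ?thesis by simp
  qed
  have par: "?I (w n) \<longleftrightarrow> (?I (w 0) \<longleftrightarrow> even n)" for n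
    by (induction n) (use wS in auto)
  have infS: "infinite {n. ?I (w n) = b}" for b
    unfolding infinite_nat_iff_unbounded_le
  proof
    fix N
    show "\<exists>n\<ge>N. n \<in> {n. ?I (w n) = b}"
    proof (cases "?I (w (2*N)) = b")
      case True then show ?thesis by (intro exI[of _ "2*N"]) auto
    next
      case False
      then have "?I (w (Suc (2*N))) = b" using wS[of "2*N"] by auto
      then show ?thesis by (intro exI[of _ "Suc (2*N)"]) auto
    qed
  qed
  have infT: "infinite {i. ?I (f i) = b}" for b
  proof
    assume fin: "finite {i. ?I (f i) = b}"
    have "L ` {n. ?I (w n) = b} \<subseteq> {i. ?I (f i) = b}" using fL by auto
    then have "finite (L ` {n. ?I (w n) = b})" using fin finite_subset by blast
    then have "finite {n. ?I (w n) = b}"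
      using finite_imageD strict_mono_imp_inj_on[OF Lmono] by (metis inj_on_subset subset_UNIV)
    then show False using infS by blast
  qed
  have "alternating_ray V adj f"
    unfolding alternating_ray_def using ray infT[of True] infT[of False] by simp
  then show False using assms(4) by blast
qed

end
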